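(* Let $K\ge 2$, $n\ge K$ and $1\le m\le K-1$ be integers, and let $\nu_1,\dots,\nu_K$ be probability distributions supported on $[0,1]$ with means $\mu_1>\mu_2>\cdots>\mu_K$. Let $J_1,\dots,J_m$ be the arms accepted by the SAR (Successive Accepts and Rejects) algorithm, described in the context, run on these arms with budget $n$. Then the probability of error $$e_n=\mathbb{P}\big(\{J_1,\dots,J_m\}\neq\{1,\dots,m\}\big)$$ satisfies $$e_n\le 2K^2\exp\left(-\frac{n-K}{8\,\overline{\log}(K)\,H_2^{\langle m\rangle}}\right),$$ where $\overline{\log}(K)=\frac12+\sum_{i=2}^K\frac1i$.
   Context: Bandit model ($m$-best arms identification). There are $K$ arms, and arm $i$ has an unknown distribution $\nu_i$ on $[0,1]$ with mean $\mu_i$. At each round $t=1,\dots,n$ the agent chooses an arm $I_t$ (possibly depending on past observations) and observes a reward drawn from $\nu_{I_t}$, independently of the past given $I_t$. Write $X_{i,1},X_{i,2},\dots$ for the successive rewards obtained from arm $i$, and $\widehat\mu_{i,s}=\frac1s\sum_{t=1}^sX_{i,t}$ for the empirical mean of arm $i$ after $s$ pulls. Gaps and complexity. Define $\Delta_i^{\langle m\rangle}=\mu_i-\mu_{m+1}$ if $i\le m$, and $\Delta_i^{\langle m\rangle}=\mu_m-\mu_i$ if $i>m$. Let $(1),\dots,(K)$ be an ordering of $\{1,\dots,K\}$ such that $\Delta_{(1)}^{\langle m\rangle}\le\cdots\le\Delta_{(K)}^{\langle m\rangle}$, and set $H_2^{\langle m\rangle}=\max_{i\in\{1,\dots,K\}}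 i\,\big(\Delta_{(i)}^{\langle m\rangle}\big)^{-2}$. SAR algorithm. Let $A_1=\{1,\dots,K\}$, $m(1)=m$, $\overline{\log}(K)=\frac12+\sum_{i=2}^K\frac1i$, $n_0=0$, and for $k\in\{1,\dots,K-1\}$ let $n_k=\left\lceil\frac{1}{\overline{\log}(K)}\frac{n-K}{K+1-k}\right\rceil$. For each phase $k=1,\dots,K-1$: (1) Pull each active arm $i\in A_k$ exactly $n_k-n_{k-1}$ times (so that afterwards every arm of $A_k$ has been pulled $n_k$ times in total). (2) Let $\sigma_k:\{1,\dots,K+1-k\}\to A_k$ be a bijection with $\widehat\mu_{\sigma_k(1),n_k}\ge\widehat\mu_{\sigma_k(2),n_k}\ge\cdots\ge\widehat\mu_{\sigma_k(K+1-k),n_k}$. For $1\le r\le K+1-k$ define the empirical gaps $\widehat\Delta_{\sigma_k(r),n_k}=\widehat\mu_{\sigma_k(r),n_k}-\widehat\mu_{\sigma_k(m(k)+1),n_k}$ if $r\le m(k)$, and $\widehat\Delta_{\sigma_k(r),n_k}=\widehat\mu_{\sigma_k(m(k)),n_k}-\widehat\mu_{\sigma_k(r),n_k}$ if $r\ge m(k)+1$. (3) Let $i_k\in\arg\max_{i\in A_k}\widehat\Delta_{i,n_k}$ (ties broken arbitrarily) and deactivate it: $A_{k+1}=A_k\setminus\{i_k\}$. (4) If $\widehat\mu_{i_k,n_k}>\widehat\mu_{\sigma_k(m(k)+1),n_k}$, arm $i_k$ is accepted: set $m(k+1)=m(k)-1$ and $J_{m-m(k+1)}=i_k$; otherwise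 $i_k$ is rejected and $m(k+1)=m(k)$. Output: the accepted arms $J_1,\dots,J_m$. *)

theory Defs
  imports "HOL-Probability.Probability"
begin

definition logbar :: "nat \<Rightarrow> real" where
  "logbar K = 1/2 + (\<Sum>i=2..K. 1 / real i)"

definition nk :: "nat \<Rightarrow> nat \<Rightarrow> nat \<Rightarrow> nat" where
  "nk K n k = (if k = 0 then 0
     else nat \<lceil>(1 / logbar K) * ((real n - real K) / real (K + 1 - k))\<rceil>)"

definition gapm :: "(nat \<Rightarrow> real) \<Rightarrow> nat \<Rightarrow> nat \<Rightarrow> real" where
  "gapm \<mu> m i = (if i \<le> m then \<mu> i - \<mu> (m + 1) else \<mu> m - \<mu> i)"

definition H2 :: "nat \<Rightarrow> (nat \<Rightarrow> real) \<Rightarrow> nat \<Rightarrow> real" where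
  "H2 K \<mu> m = Max ((\<lambda>i. real i / (sort (map (gapm \<mu> m) [1..<K+1]) ! (i - 1))\<^sup>2) ` {1..K})"

text \<open>Empirical mean of arm i after s pulls, from the reward table X i t.\<close>
definition emp_mean :: "(nat \<Rightarrow> nat \<Rightarrow> 'a \<Rightarrow> real) \<Rightarrow> 'a \<Rightarrow> nat \<Rightarrow> nat \<Rightarrow> real" where
  "emp_mean X \<omega> i s = (\<Sum>t=1..s. X i t \<omega>) / real s"

text \<open>One phase k of SAR, state = (active set A_k, m(k), set of accepted arms).
  All tie-breaking (choice of sigma_k and of i_k) is existential.
  Convention for degenerate positions: the value at rank 0 is +infinity and the
  value at rank card A + 1 is -infinity.\<close>
definition sar_step :: "nat \<Rightarrow> nat \<Rightarrow> (nat \<Rightarrow> nat \<Rightarrow> 'a \<Rightarrow> real) \<Rightarrow> 'a \<Rightarrow> nat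
    \<Rightarrow> nat set \<times> nat \<times> nat set \<Rightarrow> nat set \<times> nat \<times> nat set \<Rightarrow> bool" where
  "sar_step K n X \<omega> k st st' \<longleftrightarrow>
     (case st of (A, mm, Acc) \<Rightarrow>
       (let mu = (\<lambda>i. emp_mean X \<omega> i (nk K n k)); c = card A in
        \<exists>\<sigma> i. bij_betw \<sigma> {1..c} A
          \<and> (\<forall>r\<in>{1..c}. \<forall>r'\<in>{1..c}. r \<le> r' \<longrightarrow> mu (\<sigma> r') \<le> mu (\<sigma> r))
          \<and> (let val = (\<lambda>r. if r = 0 then PInfty else if c < r then MInfty else ereal (mu (\<sigma> r)));
                 gap = (\<lambda>j. let r = inv_into {1..c} \<sigma> j in
                          if r \<le> mm then val r - val (mm + 1) else val mm - val r)
             in i \<in> A \<and> (\<forall>j\<in>A. gap j \<le> gap i)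
                \<and> st' = (if val (mm + 1) < ereal (mu i)
                         then (A - {i}, mm - 1, insert i Acc)
                         else (A - {i}, mm, Acc)))))"

text \<open>All possible outputs (sets of accepted arms) of SAR on outcome omega,
  over all admissible tie-breakings. If after the K-1 phases the remaining
  arm still has to be accepted (m(K) = |A_K|) it is accepted.\<close>
definition sar_outputs :: "nat \<Rightarrow> nat \<Rightarrow> nat \<Rightarrow> (nat \<Rightarrow> nat \<Rightarrow> 'a \<Rightarrow> real) \<Rightarrow> 'a \<Rightarrow> nat set set" where
  "sar_outputs K m n X \<omega> = {out. \<exists>st. st 1 = ({1..K}, m, {})
      \<and> (\<forall>k\<in>{1..K-1}. sar_step K n X \<omega> k (st k) (st (Suc k)))
      \<and> out = (case st K of (A, mm, Acc) \<Rightarrow> if mm = card A then Acc \<union> A else Acc)}"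

definition sar_error_event :: "'a measure \<Rightarrow> nat \<Rightarrow> nat \<Rightarrow> nat \<Rightarrow> (nat \<Rightarrow> nat \<Rightarrow> 'a \<Rightarrow> real) \<Rightarrow> 'a set" where
  "sar_error_event M K m n X = {\<omega>\<in>space M. \<exists>out\<in>sar_outputs K m n X \<omega>. out \<noteq> {1..m}}"

end

theory Submission
  imports Defs "HOL-Probability.Probability"
begin


lemma (in prob_space) indep_sets_reindex:
  assumes ind: "indep_sets F (f ` I)" and inj: "inj_on f I"
  shows "indep_sets (\<lambda>i. F (f i)) I"
  unfolding indep_sets_def
proof (intro conjI ballI allI impI)
  fix i assume "i \<in> I" then show "F (f i) \<subseteq> events" using ind by (auto simp: indep_sets_def)
next
  fix J A assume J: "J \<subseteq> I" "J \<noteq> {}" "finite J" and A: "A \<in> Pi J (\<lambda>i. F (f i))"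
  define B where "B = (\<lambda>y. A (the_inv_into J f y))"
  have injJ: "inj_on f J" using inj J by (meson inj_on_subset)
  have BA: "B (f j) = A j" if "j \<in> J" for j using that injJ by (simp add: B_def the_inv_into_f_f)
  have "B \<in> Pi (f ` J) F" using A BA by auto
  moreover have "f ` J \<subseteq> f ` I" "f ` J \<noteq> {}" "finite (f ` J)" using J by auto
  ultimately have "prob (\<Inter>j\<in>f ` J. B j) = (\<Prod>j\<in>f ` J. prob (B j))"
    using ind unfolding indep_sets_def by blast
  moreover have "(\<Inter>j\<in>f ` J. B j) = (\<Inter>j\<in>J. A j)" using BA by auto
  moreover have "(\<Prod>j\<in>f ` J. prob (B j)) = (\<Prod>j\<in>J. prob (A j))"
    using BA injJ by (simp add: prod.reindex)
  ultimately show "prob (\<Inter>j\<in>J. A j) = (\<Prod>j\<in>J. prob (A j))" by simp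
qed

lemma (in prob_space) indep_vars_reindex:
  assumes ind: "indep_vars M' X (f ` I)" and inj: "inj_on f I"
  shows "indep_vars (\<lambda>i. M' (f i)) (\<lambda>i. X (f i)) I"
  using ind indep_sets_reindex[OF _ inj, of "\<lambda>i. sigma_sets (space M) { X i -` A \<inter> space M | A. A \<in> sets (M' i)}"]
  unfolding indep_vars_def by auto



lemma (in prob_space) hoeff_arm:
  fixes X :: "nat \<Rightarrow> nat \<Rightarrow> 'a \<Rightarrow> real" and \<nu> :: "real measure"
  assumes ind: "indep_vars (\<lambda>_. borel) (\<lambda>t. X i t) {1..}"
    and distr: "\<And>t. 1 \<le> t \<Longrightarrow> distr M borel (X i t) = \<nu>"
    and AE01: "AE x in \<nu>. 0 \<le> x \<and> x \<le> 1"
    and mu: "mu = (\<integral>x. x \<partial>\<nu>)"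
    and d: "\<delta> \<ge> 0"
  shows "prob {\<omega>\<in>space M. \<bar>emp_mean X \<omega> i s - mu\<bar> \<ge> \<delta>} \<le> 2 * exp (-2 * real s * \<delta>\<^sup>2)"
proof (cases "s = 0")
  case True
  then show ?thesis by simp (smt (verit) prob_le_1)
next
  case False
  have rv: "random_variable borel (X i t)" if "1 \<le> t" for t
    using ind that unfolding indep_vars_def by auto
  have ind': "indep_vars (\<lambda>_. borel) (\<lambda>t. X i t) {1..s}"
    by (rule indep_vars_subset[OF ind]) auto
  have AEt: "AE x in M. X i t x \<in> {0..1}" if "1 \<le> t" for t
  proof -
    have "AE x in distr M borel (X i t). x \<in> {0..1}" using distr[OF that] AE01 by (auto elim!: eventually_mono)
    then show ?thesis using rv[OF that] by (subst (asm) AE_distr_iff) auto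
  qed
  have E: "expectation (X i t) = mu" if "1 \<le> t" for t
  proof -
    have "expectation (X i t) = lebesgue_integral (distr M borel (X i t)) (\<lambda>x. x)"
      using rv[OF that] by (intro integral_distr [symmetric]) auto
    then show ?thesis using distr[OF that] mu by simp
  qed
  interpret H: Hoeffding_ineq M "{1..s}" "\<lambda>t. X i t" "\<lambda>_. 0" "\<lambda>_. 1" "\<Sum>t\<in>{1..s}. expectation (X i t)"
    by unfold_locales (use ind' AEt in auto)
  have sumE: "(\<Sum>t\<in>{1..s}. expectation (X i t)) = real s * mu" using E by simp
  have "prob {x\<in>space M. \<bar>(\<Sum>t\<in>{1..s}. X i t x) - real s * mu\<bar> \<ge> real s * \<delta>}
        \<le> 2 * exp (-2 * (real s * \<delta>)\<^sup>2 / (\<Sum>t\<in>{1..s}. (1 - 0)\<^sup>2))"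
    using H.Hoeffding_ineq_abs_ge[of "real s * \<delta>"] False d sumE by simp
  also have "-2 * (real s * \<delta>)\<^sup>2 / (\<Sum>t\<in>{1..s}. (1 - 0)\<^sup>2) = -2 * real s * \<delta>\<^sup>2"
    using False by (simp add: power2_eq_square)
  also have "{x\<in>space M. \<bar>(\<Sum>t\<in>{1..s}. X i t x) - real s * mu\<bar> \<ge> real s * \<delta>}
        = {\<omega>\<in>space M. \<bar>emp_mean X \<omega> i s - mu\<bar> \<ge> \<delta>}"
  proof -
    have "\<bar>(\<Sum>t\<in>{1..s}. X i t x) - real s * mu\<bar> = real s * \<bar>emp_mean X x i s - mu\<bar>" for x
    proof -
      have "(\<Sum>t\<in>{1..s}. X i t x) - real s * mu = real s * (emp_mean X x i s - mu)"
        using False by (simp add: emp_mean_def field_simps)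
      then show ?thesis by (simp add: abs_mult)
    qed
    then show ?thesis using False by auto
  qed
  finally show ?thesis .
qed



lemma pig1: "finite A \<Longrightarrow> S \<subseteq> A \<Longrightarrow> card S > card (A \<inter> G) \<Longrightarrow> \<exists>x\<in>S. x \<notin> G"
proof (rule ccontr)
  assume "finite A" "S \<subseteq> A" "card S > card (A \<inter> G)" "\<not> (\<exists>x\<in>S. x \<notin> G)"
  then have "S \<subseteq> A \<inter> G" by auto
  then have "card S \<le> card (A \<inter> G)" using \<open>finite A\<close> by (intro card_mono) auto
  then show False using \<open>card S > card (A \<inter> G)\<close> by simp
qed
lemma pig2: "finite A \<Longrightarrow> S \<subseteq> A \<Longrightarrow> card S > card (A - G) \<Longrightarrow> \<exists>x\<in>S. x \<in> G"
proof (rule ccontr)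
  assume "finite A" "S \<subseteq> A" "card S > card (A - G)" "\<not> (\<exists>x\<in>S. x \<in> G)"
  then have "S \<subseteq> A - G" by auto
  then have "card S \<le> card (A - G)" using \<open>finite A\<close> by (intro card_mono) auto
  then show False using \<open>card S > card (A - G)\<close> by simp
qed

lemma core_mid:
  fixes f \<mu> :: "nat \<Rightarrow> real" and \<sigma> :: "nat \<Rightarrow> nat"
  assumes finA: "finite A" and c: "c = card A" and mm1: "1 \<le> mm" and mmc: "mm < c"
    and mmG: "mm = card (A \<inter> G)"
    and bij: "bij_betw \<sigma> {1..c} A"
    and sorted: "\<forall>r\<in>{1..c}. \<forall>r'\<in>{1..c}. r \<le> r' \<longrightarrow> f (\<sigma> r') \<le> f (\<sigma> r)"
    and val: "val = (\<lambda>r. if r = 0 then PInfty else if c < r then MInfty else ereal (f (\<sigma> r)))"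
    and gap: "gap = (\<lambda>j. let r = inv_into {1..c} \<sigma> j in
                          if r \<le> mm then val r - val (mm + 1) else val mm - val r)"
    and iA: "i \<in> A" and imax: "\<forall>j\<in>A. gap j \<le> gap i"
    and goods: "\<forall>g\<in>A \<inter> G. a \<le> \<mu> g" and bads: "\<forall>x\<in>A - G. \<mu> x \<le> b" and ba: "b < a"
    and dpos: "\<delta> > 0" and close: "\<forall>j\<in>A. \<bar>f j - \<mu> j\<bar> < \<delta>"
    and js: "js \<in> A" and jsG: "js \<in> G \<Longrightarrow> b + 4 * \<delta> \<le> \<mu> js"
    and jsB: "js \<notin> G \<Longrightarrow> \<mu> js \<le> a - 4 * \<delta>"
  shows "(val (mm + 1) < ereal (f i)) \<longleftrightarrow> i \<in> G"
proof -
  define rk where "rk = (\<lambda>j. inv_into {1..c} \<sigma> j)"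
  define F where "F = (\<lambda>r. f (\<sigma> r))"
  have inj: "inj_on \<sigma> {1..c}" using bij by (simp add: bij_betw_def)
  have img: "\<sigma> ` {1..c} = A" using bij by (simp add: bij_betw_def)
  have rkA: "rk j \<in> {1..c}" "\<sigma> (rk j) = j" if "j \<in> A" for j
    using that img inv_into_into[of j \<sigma> "{1..c}"] f_inv_into_f[of j \<sigma> "{1..c}"]
    by (auto simp: rk_def)
  have frk: "f j = F (rk j)" if "j \<in> A" for j using rkA[OF that] by (simp add: F_def)
  have rks: "rk (\<sigma> r) = r" if "r \<in> {1..c}" for r using inj that by (simp add: rk_def)
  have mono: "F r' \<le> F r" if "r \<in> {1..c}" "r' \<in> {1..c}" "r \<le> r'" for r r'
    using sorted that by (simp add: F_def)
  have valr: "val r = ereal (F r)" if "r \<in> {1..c}" for r using that by (simp add: val F_def)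
  define gr where "gr = (\<lambda>j. if rk j \<le> mm then f j - F (mm+1) else F mm - f j)"
  have gapr: "gap j = ereal (gr j)" if "j \<in> A" for j
  proof -
    have "gap j = (if rk j \<le> mm then val (rk j) - val (mm+1) else val mm - val (rk j))"
      by (simp add: gap rk_def Let_def)
    then show ?thesis using rkA[OF that] mm1 mmc frk[OF that] valr[of "rk j"] valr[of mm] valr[of "mm+1"]
      by (simp add: gr_def)
  qed
  have cardimg: "card (\<sigma> ` S) = card S" if "S \<subseteq> {1..c}" for S
    using inj that by (meson card_image inj_on_subset)
  have sub: "\<sigma> ` S \<subseteq> A" if "S \<subseteq> {1..c}" for S using img that by auto
  have cAG: "card (A - G) = c - mm" using finA c mmG
    by (metis card_Diff_subset_Int finite_Int Diff_Int2 inf.idem) 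
  obtain b' where b': "b' \<in> A - G" "F (mm+1) \<le> f b'"
  proof -
    have "\<exists>x\<in>\<sigma> ` {1..mm+1}. x \<notin> G"
      using pig1[OF finA sub[of "{1..mm+1}"]] cardimg[of "{1..mm+1}"] mmc mmG by auto
    then obtain r where "r \<in> {1..mm+1}" "\<sigma> r \<notin> G" by auto
    then show ?thesis using that[of "\<sigma> r"] img mono[of r "mm+1"] mmc by (auto simp: F_def)
  qed
  obtain g' where g': "g' \<in> A \<inter> G" "f g' \<le> F mm"
  proof -
    have "card {mm..c} > card (A - G)" using cAG mm1 mmc by simp
    then have "\<exists>x\<in>\<sigma> ` {mm..c}. x \<in> G"
      using pig2[OF finA sub[of "{mm..c}"]] cardimg[of "{mm..c}"] mm1 by auto
    then obtain r where "r \<in> {mm..c}" "\<sigma> r \<in> G" by auto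
    then show ?thesis using that[of "\<sigma> r"] img mono[of mm r] mmc mm1 by (auto simp: F_def)
  qed
  have cc: "\<exists>g\<in>A \<inter> G. f g \<le> F (mm+1)" if x: "x \<in> A - G" "rk x \<le> mm" for x
  proof (rule ccontr)
    assume nt: "\<not> ?thesis"
    have "A \<inter> G \<subseteq> \<sigma> ` {1..mm} - {x}"
    proof
      fix g assume g: "g \<in> A \<inter> G"
      then have "\<not> f g \<le> F (mm+1)" using nt by auto
      then have "\<not> mm + 1 \<le> rk g" using mono[of "mm+1" "rk g"] rkA[of g] g frk[of g] mmc by auto
      then show "g \<in> \<sigma> ` {1..mm} - {x}" using rkA[of g] g x by (auto intro!: image_eqI[of g \<sigma> "rk g"])
    qed
    then have "card (A \<inter> G) \<le> card (\<sigma> ` {1..mm} - {x})" by (intro card_mono) auto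
    also have "\<dots> = mm - 1" using x rkA[of x] cardimg[of "{1..mm}"] mmc
      by (subst card_Diff_singleton) (auto intro!: image_eqI[of x \<sigma> "rk x"])
    finally show False using mmG mm1 by simp
  qed
  have dd: "\<exists>x\<in>A - G. F mm \<le> f x" if g: "g \<in> A \<inter> G" "mm < rk g" for g
  proof -
    have "g \<notin> \<sigma> ` {1..mm}"
    proof
      assume "g \<in> \<sigma> ` {1..mm}"
      then obtain r where "r \<in> {1..mm}" "g = \<sigma> r" by auto
      then show False using g rks[of r] mmc by auto
    qed
    have "card (A \<inter> G - {g}) = mm - 1" using mmG g finA by (simp add: card_Diff_singleton)
    moreover have "card (\<sigma> ` {1..mm}) = mm" using cardimg[of "{1..mm}"] mmc by simp
    ultimately have "card (A \<inter> G - {g}) < card (\<sigma> ` {1..mm})" using mm1 by simp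
    then have "\<not> \<sigma> ` {1..mm} \<subseteq> A \<inter> G - {g}" using finA by (meson card_mono finite_Diff finite_Int not_le)
    then obtain r where r: "r \<in> {1..mm}" "\<sigma> r \<notin> A \<inter> G - {g}" by (meson image_subset_iff)
    have "\<sigma> r \<in> A" using r img mmc by auto
    moreover have "\<sigma> r \<noteq> g" using r \<open>g \<notin> \<sigma> ` {1..mm}\<close> by auto
    ultimately have "\<sigma> r \<in> A - G" using r by auto
    then show ?thesis using r mono[of r mm] mmc by (auto simp: F_def)
  qed
  have abs_le: "\<mu> j - \<delta> < f j" "f j < \<mu> j + \<delta>" if "j \<in> A" for j using close that by auto
  have grjs: "gr js > 2 * \<delta>"
  proof (cases "js \<in> G")
    case True
    have big: "f js > b + 3 * \<delta>" using jsG[OF True] abs_le[OF js] by simp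
    have "rk js \<le> mm"
    proof (rule ccontr)
      assume "\<not> rk js \<le> mm"
      then obtain x where x: "x \<in> A - G" "F mm \<le> f x" using dd[of js] True js by auto
      have "F (rk js) \<le> F mm" using mono[of mm "rk js"] rkA[OF js] mm1 mmc \<open>\<not> rk js \<le> mm\<close> by auto
      moreover have "\<mu> x \<le> b" "f x < \<mu> x + \<delta>" using x bads abs_le[of x] by auto
      ultimately show False using x(2) frk[OF js] big using dpos by linarith
    qed
    moreover have "\<mu> b' \<le> b" "f b' < \<mu> b' + \<delta>" using b' bads abs_le[of b'] by auto
    ultimately show ?thesis using b'(2) big dpos by (simp add: gr_def)
  next
    case False
    have small: "f js < a - 3 * \<delta>" using jsB[OF False] abs_le[OF js] by simp
    have "\<not> rk js \<le> mm"
    proof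
      assume "rk js \<le> mm"
      then obtain g where g: "g \<in> A \<inter> G" "f g \<le> F (mm+1)" using cc[of js] False js by auto
      have "F (mm+1) \<le> F (rk js)" using mono[of "rk js" "mm+1"] rkA[OF js] mmc \<open>rk js \<le> mm\<close> by auto
      moreover have "a \<le> \<mu> g" "\<mu> g - \<delta> < f g" using g goods abs_le[of g] by auto
      ultimately show False using g(2) frk[OF js] small using dpos by linarith
    qed
    moreover have "a \<le> \<mu> g'" "\<mu> g' - \<delta> < f g'" using g' goods abs_le[of g'] by auto
    ultimately show ?thesis using g'(2) small dpos by (simp add: gr_def)
  qed
  have "gr js \<le> gr i" using imax js iA gapr by fastforce
  then have gri: "gr i > 2 * \<delta>" using grjs by simp
  have valmm: "val (mm+1) = ereal (F (mm+1))" using valr mmc by simp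
  show ?thesis
  proof
    assume acc: "val (mm + 1) < ereal (f i)"
    show "i \<in> G"
    proof (rule ccontr)
      assume iG: "i \<notin> G"
      have "rk i \<le> mm"
      proof (rule ccontr)
        assume "\<not> rk i \<le> mm"
        then have "F (rk i) \<le> F (mm+1)" using mono[of "mm+1" "rk i"] rkA[OF iA] by auto
        then show False using acc valmm frk[OF iA] by simp
      qed
      then obtain g where g: "g \<in> A \<inter> G" "f g \<le> F (mm+1)" using cc[of i] iG iA by auto
      have "gr i = f i - F (mm+1)" using \<open>rk i \<le> mm\<close> by (simp add: gr_def)
      also have "\<dots> < 2 * \<delta>"
      proof -
        have "a \<le> \<mu> g" "\<mu> g - \<delta> < f g" "\<mu> i \<le> b" "f i < \<mu> i + \<delta>" using g goods bads abs_le[of g] abs_le[OF iA] iA iG by auto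
        then show ?thesis using g(2) ba using dpos by linarith
      qed
      finally show False using gri by simp
    qed
  next
    assume iG: "i \<in> G"
    show "val (mm + 1) < ereal (f i)"
    proof (rule ccontr)
      assume "\<not> ?thesis"
      then have le: "f i \<le> F (mm+1)" using valmm by simp
      show False
      proof (cases "rk i \<le> mm")
        case True
        then show False using le gri dpos by (simp add: gr_def)
      next
        case False
        then obtain x where x: "x \<in> A - G" "F mm \<le> f x" using dd[of i] iG iA by auto
        have "gr i = F mm - f i" using False by (simp add: gr_def)
        also have "\<dots> < 2 * \<delta>"
        proof -
          have "a \<le> \<mu> i" "\<mu> i - \<delta> < f i" "\<mu> x \<le> b" "f x < \<mu> x + \<delta>" using x goods bads abs_le[of x] abs_le[OF iA] iA iG by auto
          then show ?thesis using x(2) ba using dpos by linarith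
        qed
        finally show False using gri by simp
      qed
    qed
  qed
qed



definition valf :: "nat \<Rightarrow> (nat \<Rightarrow> real) \<Rightarrow> (nat \<Rightarrow> nat) \<Rightarrow> nat \<Rightarrow> ereal" where
  "valf c f \<sigma> r = (if r = 0 then PInfty else if c < r then MInfty else ereal (f (\<sigma> r)))"
definition gapf :: "nat \<Rightarrow> nat \<Rightarrow> (nat \<Rightarrow> real) \<Rightarrow> (nat \<Rightarrow> nat) \<Rightarrow> nat \<Rightarrow> ereal" where
  "gapf c mm f \<sigma> j = (let r = inv_into {1..c} \<sigma> j in
      if r \<le> mm then valf c f \<sigma> r - valf c f \<sigma> (mm + 1) else valf c f \<sigma> mm - valf c f \<sigma> r)"

definition stepP where
  "stepP A mm Acc f st' \<sigma> i \<longleftrightarrow> bij_betw \<sigma> {1..card A} A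
     \<and> (\<forall>r\<in>{1..card A}. \<forall>r'\<in>{1..card A}. r \<le> r' \<longrightarrow> f (\<sigma> r') \<le> f (\<sigma> r))
     \<and> i \<in> A \<and> (\<forall>j\<in>A. gapf (card A) mm f \<sigma> j \<le> gapf (card A) mm f \<sigma> i)
     \<and> st' = (if valf (card A) f \<sigma> (mm + 1) < ereal (f i)
              then (A - {i}, mm - 1, insert i Acc) else (A - {i}, mm, Acc))"

lemma sar_step_iff:
  "sar_step K n X \<omega> k (A, mm, Acc) st' \<longleftrightarrow>
     (\<exists>\<sigma> i. stepP A mm Acc (\<lambda>i. emp_mean X \<omega> i (nk K n k)) st' \<sigma> i)"
  unfolding sar_step_def stepP_def gapf_def valf_def Let_def by simp

lemma step_basic:
  assumes "stepP A mm Acc f st' \<sigma> i"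
  shows "i \<in> A \<and> (st' = (A - {i}, mm - 1, insert i Acc) \<or> st' = (A - {i}, mm, Acc))"
  using assms unfolding stepP_def by (auto split: if_splits)

lemma step_ok:
  fixes f \<mu> :: "nat \<Rightarrow> real"
  assumes st: "stepP A mm Acc f st' \<sigma> i"
    and finA: "finite A" and c1: "1 \<le> card A" and mmG: "mm = card (A \<inter> G)"
    and goods: "\<forall>g\<in>A \<inter> G. a \<le> \<mu> g" and bads: "\<forall>x\<in>A - G. \<mu> x \<le> b" and ba: "b < a"
    and dpos: "\<delta> > 0" and close: "\<forall>j\<in>A. \<bar>f j - \<mu> j\<bar> < \<delta>"
    and js: "js \<in> A" and jsG: "js \<in> G \<Longrightarrow> b + 4 * \<delta> \<le> \<mu> js"
    and jsB: "js \<notin> G \<Longrightarrow> \<mu> js \<le> a - 4 * \<delta>"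
  shows "i \<in> A \<and> ((st' = (A - {i}, mm - 1, insert i Acc) \<and> i \<in> G) \<or> (st' = (A - {i}, mm, Acc) \<and> i \<notin> G))"
proof -
  define c where "c = card A"
  have bij: "bij_betw \<sigma> {1..c} A"
    and sorted: "\<forall>r\<in>{1..c}. \<forall>r'\<in>{1..c}. r \<le> r' \<longrightarrow> f (\<sigma> r') \<le> f (\<sigma> r)"
    and iA: "i \<in> A" and imax: "\<forall>j\<in>A. gapf c mm f \<sigma> j \<le> gapf c mm f \<sigma> i"
    and st': "st' = (if valf c f \<sigma> (mm + 1) < ereal (f i)
              then (A - {i}, mm - 1, insert i Acc) else (A - {i}, mm, Acc))"
    using st unfolding stepP_def c_def by auto
  have mmc: "mm \<le> c" using mmG finA c_def by (simp add: card_mono)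
  have key: "(valf c f \<sigma> (mm + 1) < ereal (f i)) \<longleftrightarrow> i \<in> G"
  proof (cases "mm = 0")
    case True
    then have "A \<inter> G = {}" using mmG finA by simp
    moreover have "f i \<le> f (\<sigma> 1)"
    proof -
      have img: "\<sigma> ` {1..c} = A" using bij by (simp add: bij_betw_def)
      then obtain r where "r \<in> {1..c}" "\<sigma> r = i" using iA by auto
      then show ?thesis using sorted by force
    qed
    ultimately show ?thesis using True c1 iA by (auto simp: valf_def c_def)
  next
    case False
    show ?thesis
    proof (cases "mm = c")
      case True
      then have "A \<inter> G = A" using mmG finA c_def
        by (metis card_subset_eq finite_Int inf_le1)
      then show ?thesis using True iA by (auto simp: valf_def)
    next
      case False2: False
      show ?thesis
        by (rule core_mid[OF finA c_def _ _ mmG bij sorted _ _ iA imax goods bads ba dpos close js jsG jsB])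
           (use False False2 mmc in \<open>auto simp: valf_def gapf_def fun_eq_iff\<close>)
    qed
  qed
  show ?thesis using key st' iA by (auto simp: c_def)
qed



lemma sort_exists:
  fixes g :: "nat \<Rightarrow> real"
  assumes pK: "p < K" and AK: "A \<subseteq> {1..K}" and pA: "p < card A"
  shows "\<exists>j\<in>A. sort (map g [1..<K+1]) ! p \<le> g j"
proof (rule ccontr)
  assume nt: "\<not> ?thesis"
  define L where "L = sort (map g [1..<K+1])"
  define v where "v = L ! p"
  have Asub: "A \<subseteq> {j. g j < v} \<inter> set [1..<K+1]" using nt AK by (auto simp: L_def v_def not_le)
  have "card A \<le> card ({j. g j < v} \<inter> set [1..<K+1])" by (rule card_mono[OF _ Asub]) auto
  also have "\<dots> = length (filter (\<lambda>j. g j < v) [1..<K+1])" by (simp add: distinct_length_filter)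
  also have "\<dots> = length (filter (\<lambda>x. x < v) (map g [1..<K+1]))" by (simp add: filter_map o_def)
  also have "\<dots> = length (filter (\<lambda>x. x < v) L)" unfolding L_def by (simp add: filter_sort)
  also have "\<dots> = card {i. i < length L \<and> L ! i < v}" by (rule length_filter_conv_card)
  also have "\<dots> \<le> card {..<p}"
  proof (rule card_mono)
    show "{i. i < length L \<and> L ! i < v} \<subseteq> {..<p}"
    proof
      fix i assume i: "i \<in> {i. i < length L \<and> L ! i < v}"
      have "sorted L" by (simp add: L_def)
      show "i \<in> {..<p}"
      proof (rule ccontr)
        assume "i \<notin> {..<p}"
        then have "L ! p \<le> L ! i" using sorted_nth_mono[OF \<open>sorted L\<close>, of p i] i by auto
        then show False using i by (simp add: v_def)
      qed
    qed
  qed simp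
  finally show False using pA by simp
qed

lemma gap_pos:
  fixes \<mu> :: "nat \<Rightarrow> real"
  assumes dec: "\<And>i j. i \<in> {1..K} \<Longrightarrow> j \<in> {1..K} \<Longrightarrow> i < j \<Longrightarrow> \<mu> j < \<mu> i"
    and m1: "1 \<le> m" and mK: "m \<le> K - 1" and j: "j \<in> {1..K}"
  shows "gapm \<mu> m j > 0"
  using dec[of j "m+1"] dec[of m j] m1 mK j by (auto simp: gapm_def)

lemma sortD_pos:
  fixes \<mu> :: "nat \<Rightarrow> real"
  assumes dec: "\<And>i j. i \<in> {1..K} \<Longrightarrow> j \<in> {1..K} \<Longrightarrow> i < j \<Longrightarrow> \<mu> j < \<mu> i"
    and m1: "1 \<le> m" and mK: "m \<le> K - 1" and p: "p < K"
  shows "sort (map (gapm \<mu> m) [1..<K+1]) ! p > 0"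
proof -
  have "sort (map (gapm \<mu> m) [1..<K+1]) ! p \<in> set (sort (map (gapm \<mu> m) [1..<K+1]))"
    using p by (intro nth_mem) simp
  then have "sort (map (gapm \<mu> m) [1..<K+1]) ! p \<in> gapm \<mu> m ` {1..K}"
  proof -
    have e: "set [1..<K+1] = {1..K}" by auto
    show ?thesis using \<open>_ \<in> set (sort _)\<close> by (simp only: set_sort set_map e)
  qed
  then obtain j where "j \<in> {1..K}" "sort (map (gapm \<mu> m) [1..<K+1]) ! p = gapm \<mu> m j" by auto
  then show ?thesis using gap_pos[OF dec m1 mK] by auto
qed

definition Inv :: "nat \<Rightarrow> nat \<Rightarrow> nat \<Rightarrow> nat set \<times> nat \<times> nat set \<Rightarrow> bool" where
  "Inv K m k st \<longleftrightarrow> (case st of (A, mm, Acc) \<Rightarrow>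
     A \<subseteq> {1..K} \<and> card A = K + 1 - k \<and> mm = card (A \<inter> {1..m}) \<and> Acc \<subseteq> {1..m}
     \<and> Acc \<inter> A = {} \<and> {1..m} \<subseteq> Acc \<union> A)"

lemma sar_correct:
  fixes \<mu> :: "nat \<Rightarrow> real"
  assumes K2: "2 \<le> K" and m1: "1 \<le> m" and mK: "m \<le> K - 1"
    and dec: "\<And>i j. i \<in> {1..K} \<Longrightarrow> j \<in> {1..K} \<Longrightarrow> i < j \<Longrightarrow> \<mu> j < \<mu> i"
    and good: "\<forall>k\<in>{1..K-1}. \<forall>i\<in>{1..K}. \<bar>emp_mean X \<omega> i (nk K n k) - \<mu> i\<bar>
                  < sort (map (gapm \<mu> m) [1..<K+1]) ! (K - k) / 4"
    and out: "out \<in> sar_outputs K m n X \<omega>"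
  shows "out = {1..m}"
proof -
  define G where "G = {1..m}"
  define D where "D = (\<lambda>k. sort (map (gapm \<mu> m) [1..<K+1]) ! (K - k))"
  obtain st where st1: "st 1 = ({1..K}, m, {})"
    and steps: "\<forall>k\<in>{1..K-1}. sar_step K n X \<omega> k (st k) (st (Suc k))"
    and outd: "out = (case st K of (A, mm, Acc) \<Rightarrow> if mm = card A then Acc \<union> A else Acc)"
    using out unfolding sar_outputs_def by blast
  have goodsG: "\<mu> m \<le> \<mu> g" if "g \<in> {1..K}" "g \<in> G" for g
  proof (cases "g = m")
    case False
    then have "g < m" using that by (auto simp: G_def)
    moreover have "m \<in> {1..K}" using m1 mK by auto
    ultimately show ?thesis using dec[of g m] that by auto
  qed simp
  have badsG: "\<mu> x \<le> \<mu> (m+1)" if "x \<in> {1..K}" "x \<notin> G" for x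
  proof (cases "x = m+1")
    case False
    then have "m + 1 < x" using that by (auto simp: G_def)
    moreover have "m + 1 \<in> {1..K}" using m1 mK by auto
    ultimately show ?thesis using dec[of "m+1" x] that by auto
  qed simp
  have ba: "\<mu> (m+1) < \<mu> m" using dec[of m "m+1"] m1 mK by auto
  have inv: "Inv K m k (st k)" if "1 \<le> k" "k \<le> K" for k
    using that
  proof (induction k)
    case 0 then show ?case by simp
  next
    case (Suc k)
    show ?case
    proof (cases "k = 0")
      case True
      then show ?thesis using st1 mK K2 by (simp add: Inv_def G_def, linarith)
    next
      case False
      then have k: "k \<in> {1..K-1}" using Suc.prems by auto
      obtain A mm Acc where stk: "st k = (A, mm, Acc)" by (cases "st k") auto
      have IH: "Inv K m k (A, mm, Acc)" using Suc.IH False Suc.prems stk by auto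
      then have AK: "A \<subseteq> {1..K}" and cA: "card A = K + 1 - k" and mmG: "mm = card (A \<inter> G)"
        and AccG: "Acc \<subseteq> G" and disj: "Acc \<inter> A = {}" and cov: "G \<subseteq> Acc \<union> A"
        by (auto simp: Inv_def G_def)
      have finA: "finite A" using AK finite_subset by blast
      define f where "f = (\<lambda>i. emp_mean X \<omega> i (nk K n k))"
      obtain \<sigma> i where sp: "stepP A mm Acc f (st (Suc k)) \<sigma> i"
      proof -
        have "sar_step K n X \<omega> k (st k) (st (Suc k))" using steps k by blast
        then have "sar_step K n X \<omega> k (A, mm, Acc) (st (Suc k))" using stk by simp
        then show ?thesis using that unfolding sar_step_iff f_def by blast
      qed
      have Dpos: "D k > 0" unfolding D_def by (rule sortD_pos[OF dec m1 mK]) (use k in auto)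
      obtain js where js: "js \<in> A" "D k \<le> gapm \<mu> m js"
      proof -
        have p1: "K - k < K" and p2: "K - k < card A" using k cA by auto
        show ?thesis using sort_exists[OF p1 AK p2, of "gapm \<mu> m"] that unfolding D_def by blast
      qed
      have close: "\<forall>j\<in>A. \<bar>f j - \<mu> j\<bar> < D k / 4"
      proof
        fix j assume "j \<in> A"
        then have "j \<in> {1..K}" using AK by auto
        then show "\<bar>f j - \<mu> j\<bar> < D k / 4" using good k unfolding f_def D_def by blast
      qed
      have res: "i \<in> A \<and> ((st (Suc k) = (A - {i}, mm - 1, insert i Acc) \<and> i \<in> G) \<or> (st (Suc k) = (A - {i}, mm, Acc) \<and> i \<notin> G))"
      proof (rule step_ok[OF sp finA _ mmG _ _ ba _ close js(1)])
        show "1 \<le> card A" using cA k by auto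
        show "\<forall>g\<in>A \<inter> G. \<mu> m \<le> \<mu> g" using goodsG AK by auto
        show "\<forall>x\<in>A - G. \<mu> x \<le> \<mu> (m + 1)" using badsG AK by auto
        show "0 < D k / 4" using Dpos by simp
        show "\<mu> (m + 1) + 4 * (D k / 4) \<le> \<mu> js" if "js \<in> G"
          using js that AK by (auto simp: gapm_def G_def)
        show "\<mu> js \<le> \<mu> m - 4 * (D k / 4)" if "js \<notin> G"
          using js that AK by (auto simp: gapm_def G_def)
      qed
      have iA: "i \<in> A" using res by simp
      have "card (A - {i}) = card A - 1" using iA finA by (simp add: card_Diff_singleton)
      then have cA': "card (A - {i}) = K + 1 - Suc k" using cA by simp
      from res show ?thesis
      proof (elim conjE disjE)
        assume e: "st (Suc k) = (A - {i}, mm - 1, insert i Acc)" and iG: "i \<in> G"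
        have "(A - {i}) \<inter> G = (A \<inter> G) - {i}" by auto
        moreover have "card ((A \<inter> G) - {i}) = card (A \<inter> G) - 1"
          using iA iG finA by (intro card_Diff_singleton) auto
        ultimately have "card ((A - {i}) \<inter> G) = mm - 1" using mmG by simp
        then show ?thesis using e AK cA' AccG disj cov iG iA by (auto simp: Inv_def G_def)
      next
        assume e: "st (Suc k) = (A - {i}, mm, Acc)" and iG: "i \<notin> G"
        have "(A - {i}) \<inter> G = A \<inter> G" using iG by auto
        then show ?thesis using e AK cA' AccG disj cov iG iA mmG by (auto simp: Inv_def G_def)
      qed
    qed
  qed
  obtain A mm Acc where stK: "st K = (A, mm, Acc)" by (cases "st K") auto
  have "Inv K m K (A, mm, Acc)" using inv[of K] K2 stK by auto
  then have AK: "A \<subseteq> {1..K}" and cA: "card A = 1" and mmG: "mm = card (A \<inter> G)"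
    and AccG: "Acc \<subseteq> G" and cov: "G \<subseteq> Acc \<union> A" by (auto simp: Inv_def G_def)
  obtain a where Aa: "A = {a}" using cA card_1_singletonE by blast
  show ?thesis
  proof (cases "a \<in> G")
    case True
    then have "mm = card A" using mmG Aa by simp
    then show ?thesis using outd stK AccG cov Aa True by (auto simp: G_def)
  next
    case False
    then have "mm \<noteq> card A" using mmG Aa by simp
    then show ?thesis using outd stK AccG cov Aa False by (auto simp: G_def)
  qed
qed



lemma stepP_alt:
  "stepP A mm Acc f st' \<sigma> i \<longleftrightarrow> (bij_betw \<sigma> {1..card A} A \<and> i \<in> A)
     \<and> (\<forall>r\<in>{1..card A}. \<forall>r'\<in>{1..card A}. r \<le> r' \<longrightarrow> f (\<sigma> r') \<le> f (\<sigma> r))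
     \<and> (\<forall>j\<in>A. gapf (card A) mm f \<sigma> j \<le> gapf (card A) mm f \<sigma> i)
     \<and> ((valf (card A) f \<sigma> (mm + 1) < ereal (f i) \<and> st' = (A - {i}, mm - 1, insert i Acc))
        \<or> (\<not> valf (card A) f \<sigma> (mm + 1) < ereal (f i) \<and> st' = (A - {i}, mm, Acc)))"
  unfolding stepP_def by auto

lemma pred_constI: "Measurable.pred M (\<lambda>\<omega>. c)"
  by (cases c) (auto simp: pred_def)

lemma valf_meas:
  fixes F :: "'a \<Rightarrow> nat \<Rightarrow> real"
  assumes Fm: "\<And>j. (\<lambda>\<omega>. F \<omega> j) \<in> borel_measurable M"
  shows "(\<lambda>\<omega>. valf c (F \<omega>) \<sigma> r) \<in> borel_measurable M"
  unfolding valf_def using Fm[of "\<sigma> r"] by (cases "r = 0"; cases "c < r") auto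

lemma gapf_meas:
  fixes F :: "'a \<Rightarrow> nat \<Rightarrow> real"
  assumes Fm: "\<And>j. (\<lambda>\<omega>. F \<omega> j) \<in> borel_measurable M"
  shows "(\<lambda>\<omega>. gapf c mm (F \<omega>) \<sigma> j) \<in> borel_measurable M"
  unfolding gapf_def Let_def
  by (cases "inv_into {1..c} \<sigma> j \<le> mm")
     (auto intro!: borel_measurable_ereal_diff valf_meas[OF Fm])

lemma pred_le_meas:
  fixes f g :: "'a \<Rightarrow> 'b::{second_countable_topology, linorder_topology}"
  assumes "f \<in> borel_measurable M" "g \<in> borel_measurable M"
  shows "Measurable.pred M (\<lambda>x. f x \<le> g x)" "Measurable.pred M (\<lambda>x. f x < g x)"
  using assms unfolding pred_def by (auto intro: borel_measurable_le borel_measurable_less)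

lemma stepP_pred:
  fixes F :: "'a \<Rightarrow> nat \<Rightarrow> real"
  assumes Fm: "\<And>j. (\<lambda>\<omega>. F \<omega> j) \<in> borel_measurable M" and finA: "finite A"
  shows "Measurable.pred M (\<lambda>\<omega>. stepP A mm Acc (F \<omega>) st' \<sigma> i)"
proof -
  have v: "Measurable.pred M (\<lambda>\<omega>. valf (card A) (F \<omega>) \<sigma> (mm + 1) < ereal (F \<omega> i))"
    by (intro pred_le_meas valf_meas[OF Fm]) (use Fm in auto)
  show ?thesis
    unfolding stepP_alt
    apply (intro pred_intros_logic pred_constI pred_intros_finite pred_le_meas gapf_meas[OF Fm] Fm v)
    apply (auto intro!: valf_meas[OF Fm] measurable_compose[OF Fm borel_measurable_ereal] simp: finA)
    done
qed



lemma valf_restrict: "valf c f (restrict \<sigma> {1..c}) r = valf c f \<sigma> r"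
  by (simp add: valf_def)

lemma inv_into_restrict: "inv_into S (restrict \<sigma> S) j = inv_into S \<sigma> j"
proof -
  have "(\<lambda>x. x \<in> S \<and> restrict \<sigma> S x = j) = (\<lambda>x. x \<in> S \<and> \<sigma> x = j)" by auto
  then show ?thesis unfolding inv_into_def by simp
qed

lemma gapf_restrict: "gapf c mm f (restrict \<sigma> {1..c}) j = gapf c mm f \<sigma> j"
  unfolding gapf_def inv_into_restrict valf_restrict by (rule refl)

lemma stepP_restrict:
  "stepP A mm Acc f st' \<sigma> i \<longleftrightarrow> stepP A mm Acc f st' (restrict \<sigma> {1..card A}) i"
proof -
  have b: "bij_betw (restrict \<sigma> {1..card A}) {1..card A} A = bij_betw \<sigma> {1..card A} A"
    by (rule bij_betw_cong) simp
  show ?thesis unfolding stepP_def b gapf_restrict valf_restrict by auto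
qed

lemma stepP_cong:
  assumes fg: "\<And>j. j \<in> A \<Longrightarrow> f j = g j"
  shows "stepP A mm Acc f st' \<sigma> i = stepP A mm Acc g st' \<sigma> i"
proof (cases "bij_betw \<sigma> {1..card A} A")
  case True
  then have sA: "\<sigma> r \<in> A" if "r \<in> {1..card A}" for r using that by (auto simp: bij_betw_def)
  have v: "valf (card A) f \<sigma> r = valf (card A) g \<sigma> r" for r
    using sA[of r] fg by (auto simp: valf_def)
  have gp: "gapf (card A) mm f \<sigma> j = gapf (card A) mm g \<sigma> j" for j
    unfolding gapf_def v by (rule refl)
  have s: "(\<forall>r\<in>{1..card A}. \<forall>r'\<in>{1..card A}. r \<le> r' \<longrightarrow> f (\<sigma> r') \<le> f (\<sigma> r)) =
           (\<forall>r\<in>{1..card A}. \<forall>r'\<in>{1..card A}. r \<le> r' \<longrightarrow> g (\<sigma> r') \<le> g (\<sigma> r))"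
    using sA fg by auto
  show ?thesis unfolding stepP_def gp v s using fg by auto
next
  case False
  then show ?thesis by (simp add: stepP_def)
qed

lemma reach:
  assumes st1: "st 1 = ({1..K}, m, {})"
    and steps: "\<forall>k\<in>{1..K-1}. sar_step K n X \<omega> k (st k) (st (Suc k))"
    and k: "1 \<le> k" "k \<le> K"
  shows "fst (st k) \<subseteq> {1..K} \<and> snd (snd (st k)) \<subseteq> {1..K}"
  using k
proof (induction k)
  case 0 then show ?case by simp
next
  case (Suc k)
  show ?case
  proof (cases "k = 0")
    case True then show ?thesis using st1 by simp
  next
    case False
    then have k: "k \<in> {1..K-1}" using Suc.prems by auto
    obtain A mm Acc where stk: "st k = (A, mm, Acc)" by (cases "st k") auto
    have IH: "A \<subseteq> {1..K}" "Acc \<subseteq> {1..K}" using Suc.IH False Suc.prems stk by auto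
    have "sar_step K n X \<omega> k (st k) (st (Suc k))" using steps k by blast
    then have "sar_step K n X \<omega> k (A, mm, Acc) (st (Suc k))" using stk by simp
    then obtain \<sigma> i where "stepP A mm Acc (\<lambda>i. emp_mean X \<omega> i (nk K n k)) (st (Suc k)) \<sigma> i"
      unfolding sar_step_iff by blast
    from step_basic[OF this] have iA: "i \<in> A" and
      e: "st (Suc k) = (A - {i}, mm - 1, insert i Acc) \<or> st (Suc k) = (A - {i}, mm, Acc)" by auto
    have "A - {i} \<subseteq> {1..K}" "insert i Acc \<subseteq> {1..K}" using IH iA by blast+
    with e IH show ?thesis by (elim disjE) simp_all
  qed
qed

lemma pred_countable_Ex:
  assumes "countable I" "\<And>i. i \<in> I \<Longrightarrow> Measurable.pred M (P i)"
  shows "Measurable.pred M (\<lambda>x. \<exists>i\<in>I. P i x)"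
  using assms unfolding pred_def by (intro sets.sets_Collect_countable_Ex') auto

lemma sar_step_pred:
  fixes X :: "nat \<Rightarrow> nat \<Rightarrow> 'a \<Rightarrow> real"
  assumes Xm: "\<And>i t. X i t \<in> borel_measurable M" and finA: "finite A"
  shows "Measurable.pred M (\<lambda>\<omega>. sar_step K n X \<omega> k (A, mm, Acc) st')"
proof -
  define F where "F = (\<lambda>\<omega> i. emp_mean X \<omega> i (nk K n k))"
  have Fm: "(\<lambda>\<omega>. F \<omega> j) \<in> borel_measurable M" for j
    unfolding F_def emp_mean_def using Xm by measurable
  have eq: "sar_step K n X \<omega> k (A, mm, Acc) st' \<longleftrightarrow>
      (\<exists>\<sigma>\<in>PiE {1..card A} (\<lambda>_. UNIV). \<exists>i\<in>A. stepP A mm Acc (F \<omega>) st' \<sigma> i)" for \<omega>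
  proof
    assume "sar_step K n X \<omega> k (A, mm, Acc) st'"
    then obtain \<sigma> i where s: "stepP A mm Acc (F \<omega>) st' \<sigma> i" unfolding sar_step_iff F_def by blast
    then have "i \<in> A" using step_basic by blast
    moreover have "restrict \<sigma> {1..card A} \<in> PiE {1..card A} (\<lambda>_. UNIV)" by simp
    ultimately show "\<exists>\<sigma>\<in>PiE {1..card A} (\<lambda>_. UNIV). \<exists>i\<in>A. stepP A mm Acc (F \<omega>) st' \<sigma> i"
      using s stepP_restrict by blast
  next
    assume "\<exists>\<sigma>\<in>PiE {1..card A} (\<lambda>_. UNIV). \<exists>i\<in>A. stepP A mm Acc (F \<omega>) st' \<sigma> i"
    then show "sar_step K n X \<omega> k (A, mm, Acc) st'" unfolding sar_step_iff F_def by blast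
  qed
  have c: "countable (PiE {1..card A} (\<lambda>_. UNIV :: nat set))"
    by (rule countable_PiE) auto
  show ?thesis unfolding eq
    by (intro pred_countable_Ex[OF c] pred_intros_finite finA stepP_pred[OF Fm])
qed



definition Chain :: "nat \<Rightarrow> nat \<Rightarrow> nat \<Rightarrow> (nat \<Rightarrow> nat \<Rightarrow> 'a \<Rightarrow> real) \<Rightarrow> 'a \<Rightarrow> (nat \<Rightarrow> nat set \<times> nat \<times> nat set) \<Rightarrow> bool" where
  "Chain K m n Y \<omega> st \<longleftrightarrow> st 1 = ({1..K}, m, {}) \<and> (\<forall>k\<in>{1..K-1}. sar_step K n Y \<omega> k (st k) (st (Suc k)))"

definition outp :: "nat \<Rightarrow> (nat \<Rightarrow> nat set \<times> nat \<times> nat set) \<Rightarrow> nat set" where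
  "outp K st = (case st K of (A, mm, Acc) \<Rightarrow> if mm = card A then Acc \<union> A else Acc)"

lemma outputs_Chain: "sar_outputs K m n X \<omega> = {outp K st | st. Chain K m n X \<omega> st}"
  unfolding sar_outputs_def Chain_def outp_def by blast

lemma Chain_cong:
  assumes "1 \<le> K" "\<And>k. k \<in> {1..K} \<Longrightarrow> st k = st2 k"
  shows "Chain K m n Y \<omega> st = Chain K m n Y \<omega> st2"
proof -
  have "(\<forall>k\<in>{1..K-1}. sar_step K n Y \<omega> k (st k) (st (Suc k))) =
        (\<forall>k\<in>{1..K-1}. sar_step K n Y \<omega> k (st2 k) (st2 (Suc k)))"
    using assms(2) by (intro ball_cong refl) (auto)
  moreover have "st 1 = st2 1" using assms by auto
  ultimately show ?thesis unfolding Chain_def by simp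
qed

lemma error_meas:
  fixes X :: "nat \<Rightarrow> nat \<Rightarrow> 'a \<Rightarrow> real"
  assumes Xm: "\<And>i t. i \<in> {1..K} \<Longrightarrow> 1 \<le> t \<Longrightarrow> X i t \<in> borel_measurable M" and K1: "1 \<le> K"
  shows "sar_error_event M K m n X \<in> sets M"
proof -
  define X' where "X' = (\<lambda>i t. if i \<in> {1..K} \<and> 1 \<le> t then X i t else (\<lambda>_. 0))"
  have X'm: "X' i t \<in> borel_measurable M" for i t using Xm by (simp add: X'_def)
  have empeq: "emp_mean X' \<omega> i s = emp_mean X \<omega> i s" if "i \<in> {1..K}" for \<omega> i s
    unfolding emp_mean_def X'_def using that by (intro arg_cong2[where f="(/)"] sum.cong) auto
  have stepeq: "sar_step K n X \<omega> k (A, mm, Acc) st' \<longleftrightarrow> sar_step K n X' \<omega> k (A, mm, Acc) st'"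
    if "A \<subseteq> {1..K}" for \<omega> k A mm Acc st'
    unfolding sar_step_iff using stepP_cong[of A "\<lambda>i. emp_mean X \<omega> i (nk K n k)" "\<lambda>i. emp_mean X' \<omega> i (nk K n k)"]
      empeq that by (metis subsetD)
  have chain_conv: "Chain K m n Y2 \<omega> st" if c: "Chain K m n Y1 \<omega> st"
    and e: "\<And>k A mm Acc st'. A \<subseteq> {1..K} \<Longrightarrow> sar_step K n Y1 \<omega> k (A, mm, Acc) st' \<longleftrightarrow> sar_step K n Y2 \<omega> k (A, mm, Acc) st'"
    for Y1 Y2 :: "nat \<Rightarrow> nat \<Rightarrow> 'a \<Rightarrow> real" and \<omega> st
  proof -
    have st1: "st 1 = ({1..K}, m, {})" and steps: "\<forall>k\<in>{1..K-1}. sar_step K n Y1 \<omega> k (st k) (st (Suc k))"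
      using c unfolding Chain_def by auto
    have "sar_step K n Y2 \<omega> k (st k) (st (Suc k))" if k: "k \<in> {1..K-1}" for k
    proof -
      have k1: "1 \<le> k" and k2: "k \<le> K" using k by auto
      have "fst (st k) \<subseteq> {1..K}" using reach[OF st1 steps k1 k2] by (rule conjunct1)
      moreover have "sar_step K n Y1 \<omega> k (st k) (st (Suc k))" using steps k by blast
      ultimately show ?thesis using e[of "fst (st k)" k "fst (snd (st k))" "snd (snd (st k))" "st (Suc k)"]
        by simp
    qed
    then show ?thesis using st1 unfolding Chain_def by blast
  qed
  have chaineq: "Chain K m n X \<omega> st \<longleftrightarrow> Chain K m n X' \<omega> st" for \<omega> st
    using chain_conv[of X \<omega> st X'] chain_conv[of X' \<omega> st X] stepeq by blast
  define C where "C = PiE {1..K} (\<lambda>_. Pow {1..K} \<times> (UNIV::nat set) \<times> Pow {1..K})"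
  have cP: "countable (Pow {1..K::nat})" by (rule countable_finite) simp
  have cN: "countable (UNIV::nat set)" by (rule countableI_type)
  have cT: "countable (Pow {1..K} \<times> (UNIV::nat set) \<times> Pow {1..K})"
    by (rule countable_SIGMA[OF cP]) (rule countable_SIGMA[OF cN], rule cP)
  have cC: "countable C" unfolding C_def
    by (rule countable_PiE) (simp, rule cT)
  have ev: "sar_error_event M K m n X = {\<omega>\<in>space M. \<exists>st\<in>C. Chain K m n X' \<omega> st \<and> outp K st \<noteq> {1..m}}"
  proof -
    have "(\<exists>out\<in>sar_outputs K m n X \<omega>. out \<noteq> {1..m}) \<longleftrightarrow> (\<exists>st\<in>C. Chain K m n X' \<omega> st \<and> outp K st \<noteq> {1..m})" for \<omega>
    proof
      assume "\<exists>out\<in>sar_outputs K m n X \<omega>. out \<noteq> {1..m}"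
      then obtain st where c: "Chain K m n X \<omega> st" and o: "outp K st \<noteq> {1..m}"
        unfolding outputs_Chain by blast
      define st2 where "st2 = restrict st {1..K}"
      have eqs: "\<And>k. k \<in> {1..K} \<Longrightarrow> st k = st2 k" by (simp add: st2_def)
      have "Chain K m n X' \<omega> st" using c chaineq by blast
      moreover have "Chain K m n X' \<omega> st = Chain K m n X' \<omega> st2"
        by (rule Chain_cong[OF K1]) (simp add: st2_def)
      ultimately have c2: "Chain K m n X' \<omega> st2" by simp
      have "st2 \<in> C"
      proof -
        have st1: "st 1 = ({1..K}, m, {})" and steps: "\<forall>k\<in>{1..K-1}. sar_step K n X \<omega> k (st k) (st (Suc k))"
          using c unfolding Chain_def by auto
        show ?thesis unfolding C_def st2_def using reach[OF st1 steps]
          by (auto simp: PiE_iff mem_Times_iff)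
      qed
      moreover have "outp K st2 = outp K st" using K1 by (simp add: outp_def st2_def)
      ultimately show "\<exists>st\<in>C. Chain K m n X' \<omega> st \<and> outp K st \<noteq> {1..m}" using c2 o by auto
    next
      assume "\<exists>st\<in>C. Chain K m n X' \<omega> st \<and> outp K st \<noteq> {1..m}"
      then obtain st where "Chain K m n X \<omega> st" "outp K st \<noteq> {1..m}" using chaineq by blast
      then show "\<exists>out\<in>sar_outputs K m n X \<omega>. out \<noteq> {1..m}"
        unfolding outputs_Chain by blast
    qed
    then show ?thesis unfolding sar_error_event_def by auto
  qed
  have "Measurable.pred M (\<lambda>\<omega>. \<exists>st\<in>C. Chain K m n X' \<omega> st \<and> outp K st \<noteq> {1..m})"
  proof (rule pred_countable_Ex[OF cC])
    fix st assume stC: "st \<in> C"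
    have "Measurable.pred M (\<lambda>\<omega>. sar_step K n X' \<omega> k (st k) (st (Suc k)))" if k: "k \<in> {1..K-1}" for k
    proof -
      have "fst (st k) \<subseteq> {1..K}" using stC k unfolding C_def by (auto simp: PiE_iff mem_Times_iff)
      then have fin: "finite (fst (st k))" by (meson finite_atLeastAtMost finite_subset)
      have "Measurable.pred M (\<lambda>\<omega>. sar_step K n X' \<omega> k (fst (st k), fst (snd (st k)), snd (snd (st k))) (st (Suc k)))"
        by (rule sar_step_pred[OF X'm fin])
      then show ?thesis by simp
    qed
    then show "Measurable.pred M (\<lambda>\<omega>. Chain K m n X' \<omega> st \<and> outp K st \<noteq> {1..m})"
      unfolding Chain_def by (intro pred_intros_logic pred_constI pred_intros_finite) auto
  qed
  then show ?thesis unfolding ev pred_def .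
qed



lemma logbar_pos: "logbar K > 0"
proof -
  have "(\<Sum>i=2..K. 1 / real i) \<ge> 0" by (intro sum_nonneg) simp
  then show ?thesis unfolding logbar_def by linarith
qed

lemma nk_ge:
  assumes "k \<noteq> 0" "K \<le> n"
  shows "real (nk K n k) \<ge> (1 / logbar K) * ((real n - real K) / real (K + 1 - k))"
proof -
  have "0 \<le> (1 / logbar K) * ((real n - real K) / real (K + 1 - k))"
    using assms logbar_pos[of K] by simp
  then show ?thesis using assms by (simp add: nk_def)
qed

lemma H2_ge:
  assumes "i \<in> {1..K}"
  shows "real i / (sort (map (gapm \<mu> m) [1..<K+1]) ! (i - 1))\<^sup>2 \<le> H2 K \<mu> m"
  unfolding H2_def using assms by (intro Max_ge) auto

lemma exponent_bound:
  fixes D H lb x c :: real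
  assumes D: "D > 0" and lb: "lb > 0" and c: "c > 0" and x: "x \<ge> 0"
    and H: "c / D\<^sup>2 \<le> H" and s: "s \<ge> (1 / lb) * (x / c)"
  shows "-2 * s * (D / 4)\<^sup>2 \<le> - x / (8 * lb * H)"
proof -
  have cD: "c / D\<^sup>2 > 0" using D c by simp
  then have Hpos: "H > 0" using H by linarith
  have "x / (lb * H) \<le> x / (lb * (c / D\<^sup>2))"
    using H x lb cD Hpos by (intro divide_left_mono mult_left_mono mult_pos_pos) auto
  also have "\<dots> = (1 / lb) * (x / c) * D\<^sup>2" using D c lb by (simp add: field_simps)
  also have "\<dots> \<le> s * D\<^sup>2" using s D by (intro mult_right_mono) auto
  finally have "x / (lb * H) \<le> s * D\<^sup>2" .
  then have "x / (8 * lb * H) \<le> 2 * s * (D / 4)\<^sup>2"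
    by (simp add: power2_eq_square field_simps)
  then show ?thesis by simp
qed

theorem theorem1:
  fixes M :: "'a measure" and \<nu> :: "nat \<Rightarrow> real measure"
    and X :: "nat \<Rightarrow> nat \<Rightarrow> 'a \<Rightarrow> real" and \<mu> :: "nat \<Rightarrow> real" and K n m :: nat
  assumes "prob_space M"
    and "K \<ge> 2" and "n \<ge> K" and "1 \<le> m" and "m \<le> K - 1"
    and "\<And>i. i \<in> {1..K} \<Longrightarrow> prob_space (\<nu> i)"
    and "\<And>i. i \<in> {1..K} \<Longrightarrow> sets (\<nu> i) = sets borel"
    and "\<And>i. i \<in> {1..K} \<Longrightarrow> (AE x in \<nu> i. 0 \<le> x \<and> x \<le> 1)"
    and "\<And>i. i \<in> {1..K} \<Longrightarrow> \<mu> i = (\<integral>x. x \<partial>\<nu> i)"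
    and "\<And>i j. i \<in> {1..K} \<Longrightarrow> j \<in> {1..K} \<Longrightarrow> i < j \<Longrightarrow> \<mu> j < \<mu> i"
    and "prob_space.indep_vars M (\<lambda>_. borel) (\<lambda>p. X (fst p) (snd p)) ({1..K} \<times> {1..})"
    and "\<And>i s. i \<in> {1..K} \<Longrightarrow> 1 \<le> s \<Longrightarrow> distr M borel (X i s) = \<nu> i"
  shows "sar_error_event M K m n X \<in> sets M
       \<and> measure M (sar_error_event M K m n X)
           \<le> 2 * (real K)\<^sup>2 * exp (- (real n - real K) / (8 * logbar K * H2 K \<mu> m))"
proof -
  note ps = assms(1) and K2 = assms(2) and nK = assms(3) and m1 = assms(4) and mK = assms(5)
    and AE01 = assms(8) and mudef = assms(9) and dec = assms(10) and ind = assms(11) and distr = assms(12)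
  interpret P: prob_space M by (rule ps)
  have indi: "P.indep_vars (\<lambda>_. borel) (\<lambda>t. X i t) {1..}" if i: "i \<in> {1..K}" for i
  proof -
    have "P.indep_vars (\<lambda>_. borel) (\<lambda>p. X (fst p) (snd p)) ((\<lambda>t. (i, t)) ` {1..})"
      by (rule P.indep_vars_subset[OF ind]) (use i in auto)
    from P.indep_vars_reindex[OF this] show ?thesis by (simp add: inj_on_def)
  qed
  have Xm: "X i t \<in> borel_measurable M" if "i \<in> {1..K}" "1 \<le> t" for i t
    using indi[OF that(1)] that(2) unfolding P.indep_vars_def by auto
  have meas: "sar_error_event M K m n X \<in> sets M"
    by (rule error_meas[OF Xm]) (use K2 in auto)
  define D where "D = (\<lambda>k. sort (map (gapm \<mu> m) [1..<K+1]) ! (K - k))"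
  define B where "B = (\<lambda>k i. {\<omega>\<in>space M. \<bar>emp_mean X \<omega> i (nk K n k) - \<mu> i\<bar> \<ge> D k / 4})"
  define T where "T = exp (- (real n - real K) / (8 * logbar K * H2 K \<mu> m))"
  have Bm: "B k i \<in> sets M" if "i \<in> {1..K}" for k i
  proof -
    have "(\<lambda>\<omega>. emp_mean X \<omega> i (nk K n k)) \<in> borel_measurable M"
      unfolding emp_mean_def using Xm[OF that] by measurable
    then show ?thesis unfolding B_def by measurable
  qed
  have sub: "sar_error_event M K m n X \<subseteq> (\<Union>k\<in>{1..K-1}. \<Union>i\<in>{1..K}. B k i)"
  proof
    fix \<omega> assume e: "\<omega> \<in> sar_error_event M K m n X"
    then have sp: "\<omega> \<in> space M" and ex: "\<exists>out\<in>sar_outputs K m n X \<omega>. out \<noteq> {1..m}"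
      unfolding sar_error_event_def by auto
    show "\<omega> \<in> (\<Union>k\<in>{1..K-1}. \<Union>i\<in>{1..K}. B k i)"
    proof (rule ccontr)
      assume "\<omega> \<notin> (\<Union>k\<in>{1..K-1}. \<Union>i\<in>{1..K}. B k i)"
      then have good: "\<forall>k\<in>{1..K-1}. \<forall>i\<in>{1..K}. \<bar>emp_mean X \<omega> i (nk K n k) - \<mu> i\<bar>
                  < sort (map (gapm \<mu> m) [1..<K+1]) ! (K - k) / 4"
        using sp unfolding B_def D_def by (auto simp: not_le)
      from ex obtain out where out: "out \<in> sar_outputs K m n X \<omega>" "out \<noteq> {1..m}" by blast
      have "out = {1..m}" by (rule sar_correct[OF K2 m1 mK dec good out(1)])
      then show False using out(2) by simp
    qed
  qed
  have termb: "measure M (B k i) \<le> 2 * T" if k: "k \<in> {1..K-1}" and i: "i \<in> {1..K}" for k i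
  proof -
    have Dpos: "D k > 0" unfolding D_def by (rule sortD_pos[OF dec m1 mK]) (use k in auto)
    have "measure M (B k i) \<le> 2 * exp (-2 * real (nk K n k) * (D k / 4)\<^sup>2)"
      unfolding B_def
      by (rule P.hoeff_arm[where X=X and i=i, OF indi[OF i] distr[OF i] AE01[OF i] mudef[OF i]]) (use Dpos in auto)
    also have "\<dots> \<le> 2 * T"
    proof -
      have kK: "K + 1 - k \<in> {1..K}" using k by auto
      have idx: "K + 1 - k - 1 = K - k" using k by auto
      have H: "real (K + 1 - k) / (D k)\<^sup>2 \<le> H2 K \<mu> m"
        using H2_ge[OF kK, of \<mu> m] unfolding D_def idx .
      have "-2 * real (nk K n k) * (D k / 4)\<^sup>2 \<le> - (real n - real K) / (8 * logbar K * H2 K \<mu> m)"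
        by (rule exponent_bound[OF Dpos logbar_pos _ _ H nk_ge]) (use k nK in auto)
      then show ?thesis unfolding T_def by simp
    qed
    finally show ?thesis .
  qed
  have "measure M (sar_error_event M K m n X) \<le> measure M (\<Union>k\<in>{1..K-1}. \<Union>i\<in>{1..K}. B k i)"
    using sub Bm by (intro P.finite_measure_mono) auto
  also have "\<dots> \<le> (\<Sum>k\<in>{1..K-1}. measure M (\<Union>i\<in>{1..K}. B k i))"
    using Bm by (intro measure_UNION_le) auto
  also have "\<dots> \<le> (\<Sum>k\<in>{1..K-1}. \<Sum>i\<in>{1..K}. measure M (B k i))"
    using Bm by (intro sum_mono measure_UNION_le) auto
  also have "\<dots> \<le> (\<Sum>k\<in>{1..K-1}. \<Sum>i\<in>{1..K}. 2 * T)"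
    using termb by (intro sum_mono) auto
  also have "\<dots> = real (K - 1) * real K * (2 * T)" by simp
  also have "\<dots> \<le> 2 * (real K)\<^sup>2 * T"
  proof -
    have "real (K - 1) \<le> real K" by simp
    then have "real (K - 1) * real K \<le> (real K)\<^sup>2" by (simp add: power2_eq_square mult_right_mono)
    moreover have Tp: "0 \<le> T" unfolding T_def by simp
    ultimately have "2 * (real (K - 1) * real K) * T \<le> 2 * (real K)\<^sup>2 * T"
      by (intro mult_right_mono) auto
    then show ?thesis by (simp add: algebra_simps)
  qed
  finally show ?thesis using meas unfolding T_def by simp
qed


end
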